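(* For $m,n\in\mathbb N$ define groups by generators and relations $G_{m,n}=\langle s,t\mid s^2,\ t^m,\ (st^{-1}st)^n\rangle$ and $H_{m,n}=\langle s_1,\dots,s_m,T\mid s_i^2,\ T^m,\ (s_is_{i+1})^n,\ T^{-1}s_iTs_{i+1}\ (1\le i\le m)\rangle$, with the convention $s_{m+1}=s_1$. Then there is a group isomorphism $\varphi:G_{m,n}\to H_{m,n}$ with $\varphi(s)=s_m$ and $\varphi(t)=T$. Moreover, $G_{m,n}$ is finite if and only if $m=1$ or $m=2$ or $n=1$ or $(m,n)=(3,2)$.
   Context: $\mathbb N=\{1,2,3,\dots\}$. A relator $r$ in a presentation means the relation $r=1$. *)

theory Defs
  imports "HOL-Algebra.Group"
begin

text \<open>Words over generators of type 'a: a letter (x, False) is x, (x, True) is x inverse.\<close>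
type_synonym 'a word = "('a \<times> bool) list"

inductive pres_eq :: "'a word set \<Rightarrow> 'a word \<Rightarrow> 'a word \<Rightarrow> bool" for R where
  pres_refl: "pres_eq R u u"
| pres_sym: "pres_eq R u v \<Longrightarrow> pres_eq R v u"
| pres_trans: "pres_eq R u v \<Longrightarrow> pres_eq R v w \<Longrightarrow> pres_eq R u w"
| pres_cancel: "pres_eq R (u @ [(a, b), (a, \<not> b)] @ v) (u @ v)"
| pres_rel: "r \<in> R \<Longrightarrow> pres_eq R (u @ r @ v) (u @ v)"

definition words_on :: "'a set \<Rightarrow> 'a word set" where
  "words_on X = {w. \<forall>(a, b)\<in>set w. a \<in> X}"

definition pclass :: "'a set \<Rightarrow> 'a word set \<Rightarrow> 'a word \<Rightarrow> 'a word set" where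
  "pclass X R u = {w \<in> words_on X. pres_eq R w u}"

definition presented_group :: "'a set \<Rightarrow> 'a word set \<Rightarrow> ('a word set) monoid" where
  "presented_group X R =
     \<lparr> carrier = pclass X R ` words_on X,
       mult = (\<lambda>A B. {w \<in> words_on X. \<exists>u\<in>A. \<exists>v\<in>B. pres_eq R w (u @ v)}),
       one = pclass X R [] \<rparr>"

definition gen :: "'a set \<Rightarrow> 'a word set \<Rightarrow> 'a \<Rightarrow> 'a word set" where
  "gen X R x = pclass X R [(x, False)]"

text \<open>G_{m,n} = < s, t | s^2, t^m, (s t^-1 s t)^n >, with s = 0, t = 1.\<close>
definition G_rels :: "nat \<Rightarrow> nat \<Rightarrow> nat word set" where
  "G_rels m n = { [(0, False), (0, False)],
                  replicate m (1, False),
                  concat (replicate n [(0, False), (1, True), (0, False), (1, False)]) }"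

text \<open>H_{m,n} = < s_1..s_m, T | s_i^2, T^m, (s_i s_{i+1})^n, T^-1 s_i T s_{i+1} >,
  with s_i = i (1 \<le> i \<le> m), T = 0, and s_{m+1} = s_1.\<close>
definition G_gens :: "nat set" where "G_gens = {0, 1}"

definition H_gens :: "nat \<Rightarrow> nat set" where "H_gens m = {0..m}"

definition H_succ :: "nat \<Rightarrow> nat \<Rightarrow> nat" where
  "H_succ m i = (if i = m then 1 else i + 1)"

definition H_rels :: "nat \<Rightarrow> nat \<Rightarrow> nat word set" where
  "H_rels m n = {replicate m (0, False)} \<union>
     (\<Union>i\<in>{1..m}. { [(i, False), (i, False)],
                    concat (replicate n [(i, False), (H_succ m i, False)]),
                    [(0, True), (i, False), (0, False), (H_succ m i, False)] })"

end

theory Submission imports Defs Complex_Main begin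

lemmas pres_trans' [trans] = pres_trans

lemma pres_app: "pres_eq R u v \<Longrightarrow> pres_eq R (p @ u @ q) (p @ v @ q)"
proof (induction rule: pres_eq.induct)
  case (pres_refl u) then show ?case by (rule pres_eq.pres_refl)
next
  case (pres_sym u v) then show ?case by (metis pres_eq.pres_sym)
next
  case (pres_trans u v w) then show ?case by (metis pres_eq.pres_trans)
next
  case (pres_cancel u a b v)
  have "pres_eq R ((p @ u) @ [(a, b), (a, \<not> b)] @ (v @ q)) ((p @ u) @ (v @ q))"
    by (rule pres_eq.pres_cancel)
  then show ?case by simp
next
  case (pres_rel r u v)
  have "pres_eq R ((p @ u) @ r @ (v @ q)) ((p @ u) @ (v @ q))"
    by (rule pres_eq.pres_rel[OF pres_rel])
  then show ?case by simp
qed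

lemma pres_sub: "pres_eq R u v \<Longrightarrow> x = p @ u @ q \<Longrightarrow> y = p @ v @ q \<Longrightarrow> pres_eq R x y"
  using pres_app by blast

lemma pres_app2: "pres_eq R u u' \<Longrightarrow> pres_eq R v v' \<Longrightarrow> pres_eq R (u @ v) (u' @ v')"
  by (metis pres_app append_Nil append_Nil2 pres_trans)

lemma pres_rel0: "r \<in> R \<Longrightarrow> pres_eq R r []"
  using pres_rel[of r R "[]" "[]"] by simp

lemma pres_cancel0: "pres_eq R [(a, b), (a, \<not> b)] []"
  using pres_cancel[of R "[]" a b "[]"] by simp

definition inv_word :: "'a word \<Rightarrow> 'a word" where
  "inv_word w = rev (map (\<lambda>(a, b). (a, \<not> b)) w)"

lemma inv_word_simps[simp]: "inv_word [] = []" "inv_word (x # w) = inv_word w @ [(fst x, \<not> snd x)]"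
  "inv_word (u @ v) = inv_word v @ inv_word u" "inv_word (inv_word w) = w"
  by (auto simp: inv_word_def case_prod_beta rev_map comp_def)

lemma pres_inv_r: "pres_eq R (w @ inv_word w) []"
proof (induction w)
  case Nil then show ?case by (simp add: pres_refl)
next
  case (Cons x w)
  obtain a b where x: "x = (a, b)" by force
  have "pres_eq R ([x] @ (w @ inv_word w) @ [(a, \<not> b)]) ([x] @ [] @ [(a, \<not> b)])"
    by (rule pres_app[OF Cons])
  also have "[x] @ [] @ [(a, \<not> b)] = [(a,b), (a, \<not> b)]" by (simp add: x)
  also have "pres_eq R \<dots> []" by (rule pres_cancel0)
  finally show ?case by (simp add: x)
qed

lemma pres_inv_l: "pres_eq R (inv_word w @ w) []"
  using pres_inv_r[of R "inv_word w"] by simp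

lemma pres_sym_iff: "pres_eq R u v \<longleftrightarrow> pres_eq R v u"
  using pres_sym by blast


lemma words_on_append[simp]: "u @ v \<in> words_on X \<longleftrightarrow> u \<in> words_on X \<and> v \<in> words_on X"
  by (auto simp: words_on_def)
lemma words_on_Cons[simp]: "x # v \<in> words_on X \<longleftrightarrow> fst x \<in> X \<and> v \<in> words_on X"
  by (auto simp: words_on_def)
lemma words_on_Nil[simp]: "[] \<in> words_on X"
  by (auto simp: words_on_def)
lemma words_on_replicate[simp]: "replicate k x \<in> words_on X \<longleftrightarrow> k = 0 \<or> fst x \<in> X"
  by (induction k) auto
lemma words_on_concat_replicate: "w \<in> words_on X \<Longrightarrow> concat (replicate k w) \<in> words_on X"
  by (induction k) auto
lemma words_on_inv[simp]: "inv_word w \<in> words_on X \<longleftrightarrow> w \<in> words_on X"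
  by (induction w) auto

lemma pclass_eq:
  assumes "u \<in> words_on X" "v \<in> words_on X"
  shows "pclass X R u = pclass X R v \<longleftrightarrow> pres_eq R u v"
proof
  assume "pclass X R u = pclass X R v"
  moreover have "u \<in> pclass X R u" using assms by (simp add: pclass_def pres_refl)
  ultimately show "pres_eq R u v" by (simp add: pclass_def)
next
  assume "pres_eq R u v"
  then show "pclass X R u = pclass X R v"
    unfolding pclass_def by (metis pres_trans pres_sym)
qed

lemma pclass_mult:
  assumes "u \<in> words_on X" "v \<in> words_on X"
  shows "pclass X R u \<otimes>\<^bsub>presented_group X R\<^esub> pclass X R v = pclass X R (u @ v)"
proof -
  have uu: "u \<in> pclass X R u" "v \<in> pclass X R v" using assms by (auto simp: pclass_def pres_refl)
  show ?thesis
  proof -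
    have e: "pclass X R u \<otimes>\<^bsub>presented_group X R\<^esub> pclass X R v = {w \<in> words_on X. \<exists>u\<in>pclass X R u. \<exists>v\<in>pclass X R v. pres_eq R w (u @ v)}"
      by (simp add: presented_group_def)
    show ?thesis unfolding e
  proof (intro Set.set_eqI iffI)
    fix w assume "w \<in> {w \<in> words_on X. \<exists>u\<in>pclass X R u. \<exists>v\<in>pclass X R v. pres_eq R w (u @ v)}"
    then show "w \<in> pclass X R (u @ v)" unfolding pclass_def
      by (auto intro: pres_trans pres_app2)
  next
    fix w assume "w \<in> pclass X R (u @ v)"
    then show "w \<in> {w \<in> words_on X. \<exists>u\<in>pclass X R u. \<exists>v\<in>pclass X R v. pres_eq R w (u @ v)}"
      using uu unfolding pclass_def by blast
  qed
  qed
qed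

lemma carrier_pg: "carrier (presented_group X R) = pclass X R ` words_on X"
  by (simp add: presented_group_def)

definition subst :: "('a \<Rightarrow> 'b word) \<Rightarrow> 'a word \<Rightarrow> 'b word" where
  "subst f w = concat (map (\<lambda>(a, b). if b then inv_word (f a) else f a) w)"

lemma subst_simps[simp]: "subst f [] = []" "subst f (u @ v) = subst f u @ subst f v"
  "subst f ((a, b) # w) = (if b then inv_word (f a) else f a) @ subst f w"
  by (auto simp: subst_def)

lemma subst_replicate: "subst f (replicate k x) = concat (replicate k (subst f [x]))"
  by (induction k) (auto simp: subst_def)

lemma subst_concat_replicate: "subst f (concat (replicate k w)) = concat (replicate k (subst f w))"
  by (induction k) auto

lemma subst_inv: "subst f (inv_word w) = inv_word (subst f w)"
  by (induction w) auto

lemma subst_words: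
  assumes "\<And>a. a \<in> X \<Longrightarrow> f a \<in> words_on Y" "w \<in> words_on X"
  shows "subst f w \<in> words_on Y"
  using assms(2) by (induction w) (auto simp: assms(1))

lemma subst_pres:
  assumes rel: "\<And>r. r \<in> R \<Longrightarrow> pres_eq S (subst f r) []"
  shows "pres_eq R u v \<Longrightarrow> pres_eq S (subst f u) (subst f v)"
proof (induction rule: pres_eq.induct)
  case (pres_refl u) then show ?case by (rule pres_eq.pres_refl)
next
  case (pres_sym u v) then show ?case by (metis pres_eq.pres_sym)
next
  case (pres_trans u v w) then show ?case by (metis pres_eq.pres_trans)
next
  case (pres_cancel u a b v)
  have c: "pres_eq S (subst f [(a, b), (a, \<not> b)]) []"
    using pres_inv_r[of S "f a"] pres_inv_l[of S "f a"] by auto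
  show ?case using pres_app[OF c, of "subst f u" "subst f v"] by simp
next
  case (pres_rel r u v)
  show ?case using pres_app[OF rel[OF pres_rel], of "subst f u" "subst f v"] by simp
qed

lemma subst_id:
  assumes "\<And>a. a \<in> X \<Longrightarrow> pres_eq R (f a) [(a, False)]" "w \<in> words_on X"
  shows "pres_eq R (subst f w) w"
  using assms(2)
proof (induction w)
  case Nil then show ?case by (simp add: pres_refl)
next
  case (Cons x w)
  obtain a b where x: "x = (a, b)" by force
  have a: "a \<in> X" using Cons x by simp
  have IH: "pres_eq R (subst f w) w" using Cons by simp
  have l: "pres_eq R (if b then inv_word (f a) else f a) [(a, b)]"
  proof (cases b)
    case True
    have "pres_eq R (inv_word (f a)) (inv_word (f a) @ [(a,False),(a,True)])"
      using pres_app[OF pres_cancel0[of R a False], of "inv_word (f a)" "[]"] by (simp add: pres_sym_iff)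
    also have "pres_eq R \<dots> (inv_word (f a) @ f a @ [(a,True)])"
      using pres_app[OF assms(1)[OF a], of "inv_word (f a)" "[(a,True)]"] by (simp add: pres_sym_iff)
    also have "pres_eq R \<dots> ([] @ [(a,True)])"
      using pres_app[OF pres_inv_l[of R "f a"], of "[]" "[(a,True)]"] by simp
    finally show ?thesis using True by simp
  next
    case False
    have "pres_eq R (f a) [(a, False)]" by (rule assms(1)[OF a])
    then show ?thesis using False by simp
  qed
  show ?case using pres_app2[OF l IH] x by simp
qed

lemma pclass_subst:
  assumes "\<And>r. r \<in> R \<Longrightarrow> pres_eq S (subst f r) []" "u \<in> words_on X"
  shows "{w \<in> words_on Y. \<exists>u'\<in>pclass X R u. pres_eq S w (subst f u')} = pclass Y S (subst f u)"
  unfolding pclass_def using assms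
  by (auto intro: pres_refl) (metis pres_trans subst_pres[of R S f, OF assms(1)])

lemma iso_via_subst:
  fixes X :: "'a set" and Y :: "'b set" and R S
  assumes fw: "\<And>a. a \<in> X \<Longrightarrow> f a \<in> words_on Y" and gw: "\<And>a. a \<in> Y \<Longrightarrow> g a \<in> words_on X"
  and fr: "\<And>r. r \<in> R \<Longrightarrow> pres_eq S (subst f r) []"
  and gr: "\<And>r. r \<in> S \<Longrightarrow> pres_eq R (subst g r) []"
  and gf: "\<And>a. a \<in> X \<Longrightarrow> pres_eq R (subst g (f a)) [(a, False)]"
  and fg: "\<And>a. a \<in> Y \<Longrightarrow> pres_eq S (subst f (g a)) [(a, False)]"
  defines "\<phi> \<equiv> \<lambda>A. {w \<in> words_on Y. \<exists>u\<in>A. pres_eq S w (subst f u)}"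
  shows "\<phi> \<in> iso (presented_group X R) (presented_group Y S)"
    "\<And>u. u \<in> words_on X \<Longrightarrow> \<phi> (pclass X R u) = pclass Y S (subst f u)"
proof -
  show phi: "\<And>u. u \<in> words_on X \<Longrightarrow> \<phi> (pclass X R u) = pclass Y S (subst f u)"
    unfolding \<phi>_def by (rule pclass_subst[OF fr])
  define \<psi> where "\<psi> \<equiv> \<lambda>A. {w \<in> words_on X. \<exists>u\<in>A. pres_eq R w (subst g u)}"
  have psi: "\<And>u. u \<in> words_on Y \<Longrightarrow> \<psi> (pclass Y S u) = pclass X R (subst g u)"
    unfolding \<psi>_def by (rule pclass_subst[OF gr])
  have sf: "\<And>u. u \<in> words_on X \<Longrightarrow> subst f u \<in> words_on Y" by (rule subst_words[OF fw])
  have sg: "\<And>u. u \<in> words_on Y \<Longrightarrow> subst g u \<in> words_on X" by (rule subst_words[OF gw])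
  have comp_gf: "\<And>u. subst g (subst f u) = subst (\<lambda>a. subst g (f a)) u"
  proof -
    fix u show "subst g (subst f u) = subst (\<lambda>a. subst g (f a)) u"
    proof (induction u)
      case (Cons x u) then show ?case
        by (cases x) (auto simp: subst_inv)
    qed simp
  qed
  have comp_fg: "\<And>u. subst f (subst g u) = subst (\<lambda>a. subst f (g a)) u"
  proof -
    fix u show "subst f (subst g u) = subst (\<lambda>a. subst f (g a)) u"
    proof (induction u)
      case (Cons x u) then show ?case
        by (cases x) (auto simp: subst_inv)
    qed simp
  qed
  have rt1: "\<And>u. u \<in> words_on X \<Longrightarrow> \<psi> (\<phi> (pclass X R u)) = pclass X R u"
    using phi psi sf sg comp_gf subst_id[OF gf] pclass_eq by metis
  have rt2: "\<And>u. u \<in> words_on Y \<Longrightarrow> \<phi> (\<psi> (pclass Y S u)) = pclass Y S u"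
    using phi psi sf sg comp_fg subst_id[OF fg] pclass_eq by metis
  have hom: "\<phi> \<in> hom (presented_group X R) (presented_group Y S)"
  proof (rule homI)
    fix A assume "A \<in> carrier (presented_group X R)"
    then obtain u where u: "u \<in> words_on X" "A = pclass X R u" by (auto simp: carrier_pg)
    then show "\<phi> A \<in> carrier (presented_group Y S)" using phi sf by (auto simp: carrier_pg)
  next
    fix A B assume "A \<in> carrier (presented_group X R)" "B \<in> carrier (presented_group X R)"
    then obtain u v where u: "u \<in> words_on X" "A = pclass X R u" "v \<in> words_on X" "B = pclass X R v"
      by (auto simp: carrier_pg)
    show "\<phi> (A \<otimes>\<^bsub>presented_group X R\<^esub> B) = \<phi> A \<otimes>\<^bsub>presented_group Y S\<^esub> \<phi> B"
      using u by (simp add: pclass_mult phi sf)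
  qed
  have bij: "bij_betw \<phi> (carrier (presented_group X R)) (carrier (presented_group Y S))"
  proof (rule bij_betw_byWitness[where f'=\<psi>])
    show "\<forall>a\<in>carrier (presented_group X R). \<psi> (\<phi> a) = a" using rt1 by (auto simp: carrier_pg)
    show "\<forall>a\<in>carrier (presented_group Y S). \<phi> (\<psi> a) = a" using rt2 by (auto simp: carrier_pg)
    show "\<phi> ` carrier (presented_group X R) \<subseteq> carrier (presented_group Y S)" using phi sf by (auto simp: carrier_pg)
    show "\<psi> ` carrier (presented_group Y S) \<subseteq> carrier (presented_group X R)" using psi sg by (auto simp: carrier_pg)
  qed
  show "\<phi> \<in> iso (presented_group X R) (presented_group Y S)"
    using hom bij by (simp add: iso_def)
qed


abbreviation tp :: "nat \<Rightarrow> nat word" where "tp k \<equiv> replicate k (1, False)"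
abbreviation tn :: "nat \<Rightarrow> nat word" where "tn k \<equiv> replicate k (1, True)"

lemma concat_rep_single[simp]: "concat (replicate k [x]) = replicate k x"
  by (induction k) auto

lemma inv_word_rep[simp]: "inv_word (replicate k (a, b)) = replicate k (a, \<not> b)"
  by (induction k) (auto simp: replicate_append_same)

lemma pres_rep: "pres_eq R u u' \<Longrightarrow> pres_eq R (concat (replicate n u)) (concat (replicate n u'))"
  by (induction n) (auto intro: pres_app2 pres_refl)

lemma pres_conj_pow:
  assumes "pres_eq R (q @ p) []" "pres_eq R (p @ q) []"
  shows "pres_eq R (concat (replicate n (p @ B @ q))) (p @ concat (replicate n B) @ q)"
proof (induction n)
  case 0 then show ?case using assms(2) by (simp add: pres_sym_iff)
next
  case (Suc n)
  have "pres_eq R (concat (replicate (Suc n) (p @ B @ q))) ((p @ B) @ q @ (p @ concat (replicate n B) @ q))"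
    using pres_app[OF Suc, where p="p @ B @ q" and q="[]"] by simp
  also have "pres_eq R \<dots> ((p @ B) @ [] @ (concat (replicate n B) @ q))"
    using pres_app[OF assms(1), where p="p @ B" and q="concat (replicate n B) @ q"] by simp
  finally show ?case by simp
qed

lemma pres_conj_triv:
  assumes "pres_eq R (q @ p) []" "pres_eq R (p @ q) []" "pres_eq R B []"
  shows "pres_eq R (concat (replicate n (p @ B @ q))) []"
proof -
  have "pres_eq R (concat (replicate n (p @ B @ q))) (p @ concat (replicate n B) @ q)"
    by (rule pres_conj_pow[OF assms(1,2)])
  also have "pres_eq R \<dots> (p @ concat (replicate n []) @ q)"
    by (rule pres_app[OF pres_rep[OF assms(3)]])
  also have "pres_eq R \<dots> []" using assms(2) by simp
  finally show ?thesis .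
qed

lemma H_rel_mem:
  assumes "1 \<le> i" "i \<le> m"
  shows "[(0, True), (i, False), (0, False), (H_succ m i, False)] \<in> H_rels m n"
    "[(i, False), (i, False)] \<in> H_rels m n"
    "concat (replicate n [(i, False), (H_succ m i, False)]) \<in> H_rels m n"
  using assms unfolding H_rels_def by auto

lemma H_T_mem: "replicate m (0, False) \<in> H_rels m n"
  unfolding H_rels_def by auto

lemma H_conj1:
  assumes "1 \<le> i" "i \<le> m"
  shows "pres_eq (H_rels m n) [(0, True), (i, False), (0, False)] [(H_succ m i, False)]"
proof -
  let ?j = "H_succ m i"
  have j: "1 \<le> ?j" "?j \<le> m" using assms by (auto simp: H_succ_def)
  have "pres_eq (H_rels m n) [(0, True), (i, False), (0, False)] ([(0, True), (i, False), (0, False)] @ [(?j,False),(?j,False)] @ [])"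
    using pres_app[OF pres_rel0[OF H_rel_mem(2)[OF j]], where p="[(0, True), (i, False), (0, False)]" and q="[]"]
    by (simp add: pres_sym_iff)
  also have "pres_eq (H_rels m n) \<dots> ([] @ [(0, True), (i, False), (0, False), (?j,False)] @ [(?j,False)])"
    by (simp add: pres_refl)
  also have "pres_eq (H_rels m n) \<dots> ([] @ [] @ [(?j,False)])"
    by (rule pres_app[OF pres_rel0[OF H_rel_mem(1)[OF assms]]])
  finally show ?thesis by simp
qed

lemma H_conj:
  assumes "1 \<le> k" "k \<le> m"
  shows "pres_eq (H_rels m n) (replicate k (0, True) @ [(m, False)] @ replicate k (0, False)) [(k, False)]"
  using assms
proof (induction k rule: dec_induct)
  case base
  show ?case using H_conj1[of m m n] assms by (simp add: H_succ_def)
next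
  case (step k)
  have "replicate (Suc k) (0, True) @ [(m, False)] @ replicate (Suc k) (0, False)
        = [(0, True)] @ (replicate k (0, True) @ [(m, False)] @ replicate k (0, False)) @ [(0,False)]"
    by (simp add: replicate_append_same[symmetric])
  also have "pres_eq (H_rels m n) \<dots> ([(0, True)] @ [(k, False)] @ [(0,False)])"
    by (rule pres_app[OF step(3)]) (use step in simp)
  also have "pres_eq (H_rels m n) \<dots> [(H_succ m k, False)]"
    using H_conj1[of k m n] step by simp
  finally show ?case using step by (simp add: H_succ_def)
qed

lemma G_mem: "[(0, False), (0, False)] \<in> G_rels m n" "tp m \<in> G_rels m n"
  "concat (replicate n [(0, False), (1, True), (0, False), (1, False)]) \<in> G_rels m n"
  unfolding G_rels_def by auto

lemma tp_tn: "pres_eq R (tp k @ tn k) []" "pres_eq R (tn k @ tp k) []"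
  using pres_inv_r[of R "tp k"] pres_inv_l[of R "tp k"] by simp_all

lemma G_tm: "pres_eq (G_rels m n) (tp m) []" "pres_eq (G_rels m n) (tn m) []"
proof -
  show a: "pres_eq (G_rels m n) (tp m) []" by (rule pres_rel0[OF G_mem(2)])
  have "pres_eq (G_rels m n) (tn m) (tn m @ tp m)"
    using pres_app[OF a, where p="tn m" and q="[]"] by (simp add: pres_sym_iff)
  then show "pres_eq (G_rels m n) (tn m) []" using tp_tn(2) pres_trans by blast
qed

lemma G_ss: "pres_eq (G_rels m n) (p @ [(0,False),(0,False)] @ q) (p @ q)"
  using pres_app[OF pres_rel0[OF G_mem(1)]] by simp

lemma G_conj_sq: "pres_eq (G_rels m n) (tn i @ [(0,False)] @ tp i @ tn i @ [(0,False)] @ tp i) []"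
proof -
  have "pres_eq (G_rels m n) (tn i @ [(0,False)] @ tp i @ tn i @ [(0,False)] @ tp i)
     ((tn i @ [(0,False)]) @ [] @ ([(0,False)] @ tp i))"
    using pres_app[OF tp_tn(1)] by (metis append_assoc)
  also have "pres_eq (G_rels m n) \<dots> (tn i @ tp i)" using G_ss[of m n "tn i" "tp i"] by simp
  also have "pres_eq (G_rels m n) \<dots> []" by (rule tp_tn)
  finally show ?thesis .
qed


definition fG :: "nat \<Rightarrow> nat \<Rightarrow> nat word" where
  "fG m a = (if a = 0 then [(m, False)] else [(0, False)])"
definition gH :: "nat \<Rightarrow> nat word" where
  "gH a = (if a = 0 then [(1, False)] else tn a @ [(0, False)] @ tp a)"

lemma gH_Suc_Suc: "gH (Suc i) @ gH (Suc i) = [(1,True)] @ tn i @ [(0,False)] @ tp i @ [(1,False)] @ gH (Suc i)"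
  by (simp add: gH_def replicate_append_same)

lemma gr_G:
  assumes m: "1 \<le> m" and r: "r \<in> H_rels m n"
  shows "pres_eq (G_rels m n) (subst gH r) []"
proof -
  let ?R = "G_rels m n"
  let ?s = "(0::nat, False)" and ?t = "(1::nat, False)" and ?t' = "(1::nat, True)"
  have gi: "\<And>i. 1 \<le> i \<Longrightarrow> gH i = tn i @ [?s] @ tp i" by (simp add: gH_def)
  have sq: "\<And>i. 1 \<le> i \<Longrightarrow> pres_eq ?R (gH i @ gH i) []"
    using G_conj_sq gi by (metis append_assoc)
  have rm: "pres_eq ?R (p @ tp m @ q) (p @ q)" "pres_eq ?R (p @ tn m @ q) (p @ q)" for p q
    using pres_app[OF G_tm(1)] pres_app[OF G_tm(2)] by auto
  have B: "pres_eq ?R (gH i @ gH (H_succ m i)) (tn i @ [?s, ?t', ?s, ?t] @ tp i)" if i: "1 \<le> i" "i \<le> m" for i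
  proof (cases "i < m")
    case True
    then have "H_succ m i = Suc i" by (simp add: H_succ_def)
    then have "gH i @ gH (H_succ m i) = (tn i @ [?s]) @ (tp i @ tn i) @ ([?t', ?s, ?t] @ tp i)"
      using i by (simp add: gH_def replicate_append_same[symmetric])
    also have "pres_eq ?R \<dots> ((tn i @ [?s]) @ [] @ ([?t', ?s, ?t] @ tp i))"
      by (rule pres_app[OF tp_tn(1)])
    finally show ?thesis by simp
  next
    case False
    then have im: "i = m" "H_succ m i = 1" using i by (auto simp: H_succ_def)
    have "gH i @ gH (H_succ m i) = tn m @ [?s] @ tp m @ [?t', ?s, ?t]"
      using im m by (simp add: gH_def)
    also have "pres_eq ?R \<dots> (tn m @ [?s] @ [?t', ?s, ?t])"
      using rm(1)[of "tn m @ [?s]" "[?t', ?s, ?t]"] by simp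
    also have "pres_eq ?R \<dots> (tn m @ [?s, ?t', ?s, ?t] @ tp m)"
      using rm(1)[of "tn m @ [?s, ?t', ?s, ?t]" "[]"] by (simp add: pres_sym_iff)
    finally show ?thesis using im by simp
  qed
  have C: "pres_eq ?R ([?t'] @ gH i @ [?t] @ gH (H_succ m i)) []" if i: "1 \<le> i" "i \<le> m" for i
  proof (cases "i < m")
    case True
    then have "H_succ m i = Suc i" by (simp add: H_succ_def)
    then have "[?t'] @ gH i @ [?t] @ gH (H_succ m i) = gH (Suc i) @ gH (Suc i)"
      using i by (simp add: gH_def replicate_append_same)
    then show ?thesis using sq[of "Suc i"] by simp
  next
    case False
    then have im: "i = m" "H_succ m i = 1" using i by (auto simp: H_succ_def)
    have "[?t'] @ gH i @ [?t] @ gH (H_succ m i) = [?t'] @ tn m @ ([?s] @ tp m @ [?t, ?t', ?s, ?t])"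
      using im m by (simp add: gH_def)
    also have "pres_eq ?R \<dots> ([?t'] @ [?s] @ tp m @ [?t, ?t', ?s, ?t])"
      by (rule rm(2))
    also have "pres_eq ?R \<dots> ([?t', ?s] @ [?t, ?t', ?s, ?t])"
      using rm(1)[of "[?t', ?s]" "[?t, ?t', ?s, ?t]"] by simp
    also have "pres_eq ?R \<dots> ([?t', ?s] @ [?s, ?t])"
      using pres_app[OF pres_cancel0[of ?R 1 False], where p="[?t', ?s]" and q="[?s, ?t]"] by simp
    also have "pres_eq ?R \<dots> ([?t'] @ [?t])"
      using G_ss[of m n "[?t']" "[?t]"] by simp
    also have "pres_eq ?R \<dots> []"
      using pres_cancel0[of ?R 1 True] by simp
    finally show ?thesis .
  qed
  from r consider "r = replicate m (0, False)"
    | i where "1 \<le> i" "i \<le> m" "r = [(i, False), (i, False)]"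
    | i where "1 \<le> i" "i \<le> m" "r = concat (replicate n [(i, False), (H_succ m i, False)])"
    | i where "1 \<le> i" "i \<le> m" "r = [(0, True), (i, False), (0, False), (H_succ m i, False)]"
    unfolding H_rels_def by auto
  then show ?thesis
  proof cases
    case 1
    then show ?thesis using G_tm(1)[of m n] by (simp add: subst_replicate gH_def)
  next
    case (2 i)
    then show ?thesis using sq[of i] by simp
  next
    case (3 i)
    have j: "1 \<le> H_succ m i" using 3 by (simp add: H_succ_def)
    have "subst gH r = concat (replicate n (gH i @ gH (H_succ m i)))"
      using 3 by (simp add: subst_concat_replicate)
    also have "pres_eq ?R \<dots> (concat (replicate n (tn i @ [?s, ?t', ?s, ?t] @ tp i)))"
      by (rule pres_rep[OF B[OF 3(1,2)]])
    also have "pres_eq ?R \<dots> (tn i @ concat (replicate n [?s, ?t', ?s, ?t]) @ tp i)"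
      by (rule pres_conj_pow[OF tp_tn(1)[of ?R i] tp_tn(2)[of ?R i]])
    also have "pres_eq ?R \<dots> (tn i @ [] @ tp i)"
      by (rule pres_app[OF pres_rel0[OF G_mem(3)]])
    also have "pres_eq ?R \<dots> []" using tp_tn(2) by simp
    finally show ?thesis .
  next
    case (4 i)
    have j: "1 \<le> H_succ m i" using 4 by (simp add: H_succ_def)
    have "subst gH r = [?t'] @ gH i @ [?t] @ gH (H_succ m i)"
      using 4 j by (simp add: gH_def)
    then show ?thesis using C[OF 4(1,2)] by simp
  qed
qed

lemma fr_H:
  assumes m: "1 \<le> m" and r: "r \<in> G_rels m n"
  shows "pres_eq (H_rels m n) (subst (fG m) r) []"
proof -
  let ?R = "H_rels m n"
  from r consider "r = [(0, False), (0, False)]" | "r = tp m"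
    | "r = concat (replicate n [(0, False), (1, True), (0, False), (1, False)])"
    unfolding G_rels_def by auto
  then show ?thesis
  proof cases
    case 1 then show ?thesis using pres_rel0[OF H_rel_mem(2)[of m m n]] m by (simp add: fG_def)
  next
    case 2 then show ?thesis using pres_rel0[OF H_T_mem[of m n]] by (simp add: fG_def subst_replicate)
  next
    case 3
    have "subst (fG m) r = concat (replicate n ([(m, False)] @ [(0, True), (m, False), (0, False)]))"
      using 3 m by (simp add: fG_def subst_concat_replicate)
    also have "pres_eq ?R \<dots> (concat (replicate n ([(m, False)] @ [(H_succ m m, False)])))"
      by (rule pres_rep, rule pres_app2[OF pres_refl H_conj1]) (use m in auto)
    also have "pres_eq ?R \<dots> []"
      using pres_rel0[OF H_rel_mem(3)[of m m n]] m by simp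
    finally show ?thesis .
  qed
qed

lemma iso_GH:
  assumes m: "1 \<le> m"
  shows "\<exists>\<phi>. \<phi> \<in> iso (presented_group G_gens (G_rels m n)) (presented_group (H_gens m) (H_rels m n))
              \<and> \<phi> (gen G_gens (G_rels m n) 0) = gen (H_gens m) (H_rels m n) m
              \<and> \<phi> (gen G_gens (G_rels m n) 1) = gen (H_gens m) (H_rels m n) 0"
proof -
  have fw: "\<And>a. a \<in> G_gens \<Longrightarrow> fG m a \<in> words_on (H_gens m)"
    by (auto simp: fG_def H_gens_def)
  have gw: "\<And>a. a \<in> H_gens m \<Longrightarrow> gH a \<in> words_on G_gens"
    by (auto simp: gH_def G_gens_def)
  have gf: "\<And>a. a \<in> G_gens \<Longrightarrow> pres_eq (G_rels m n) (subst gH (fG m a)) [(a, False)]"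
  proof -
    fix a assume "a \<in> G_gens"
    then consider "a = 0" | "a = 1" by (auto simp: G_gens_def)
    then show "pres_eq (G_rels m n) (subst gH (fG m a)) [(a, False)]"
    proof cases
      case 1
      have "subst gH (fG m a) = tn m @ [(0,False)] @ tp m" using 1 m by (simp add: fG_def gH_def)
      also have "pres_eq (G_rels m n) \<dots> ([] @ [(0,False)] @ tp m)"
        using pres_app[OF G_tm(2), where p="[]" and q="[(0,False)] @ tp m"] by simp
      also have "pres_eq (G_rels m n) \<dots> ([(0,False)] @ [] @ [])"
        using pres_app[OF G_tm(1), where p="[(0,False)]" and q="[]"] by simp
      finally show ?thesis using 1 by simp
    next
      case 2 then show ?thesis by (simp add: fG_def gH_def pres_refl)
    qed
  qed
  have fg: "\<And>a. a \<in> H_gens m \<Longrightarrow> pres_eq (H_rels m n) (subst (fG m) (gH a)) [(a, False)]"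
  proof -
    fix a assume a: "a \<in> H_gens m"
    show "pres_eq (H_rels m n) (subst (fG m) (gH a)) [(a, False)]"
    proof (cases "a = 0")
      case True then show ?thesis by (simp add: fG_def gH_def pres_refl)
    next
      case False
      then have "subst (fG m) (gH a) = replicate a (0, True) @ [(m, False)] @ replicate a (0, False)"
        using m by (simp add: fG_def gH_def subst_replicate)
      then show ?thesis using H_conj[of a m n] a False by (simp add: H_gens_def)
    qed
  qed
  define \<phi> where "\<phi> \<equiv> \<lambda>A. {w \<in> words_on (H_gens m). \<exists>u\<in>A. pres_eq (H_rels m n) w (subst (fG m) u)}"
  note I = iso_via_subst[OF fw gw fr_H[OF m] gr_G[OF m] gf fg, folded \<phi>_def]
  show ?thesis
  proof (intro exI conjI)
    show "\<phi> \<in> iso (presented_group G_gens (G_rels m n)) (presented_group (H_gens m) (H_rels m n))"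
      by (rule I(1))
    show "\<phi> (gen G_gens (G_rels m n) 0) = gen (H_gens m) (H_rels m n) m"
      unfolding gen_def using I(2)[of "[(0,False)]"] by (simp add: G_gens_def fG_def \<phi>_def)
    show "\<phi> (gen G_gens (G_rels m n) 1) = gen (H_gens m) (H_rels m n) 0"
      unfolding gen_def using I(2)[of "[(1,False)]"] by (simp add: G_gens_def fG_def \<phi>_def)
  qed
qed


definition stp :: "nat \<Rightarrow> (nat \<Rightarrow> complex \<Rightarrow> complex) \<Rightarrow> nat \<times> bool \<Rightarrow> nat \<times> complex \<Rightarrow> nat \<times> complex" where
  "stp m F x y = (if fst x = 0 then (fst y, F (fst y) (snd y))
     else if fst x = 1 then (if snd x then ((fst y + m - 1) mod m, snd y) else (Suc (fst y) mod m, snd y))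
     else y)"

lemma act_pres_gen:
  assumes Y: "\<And>x y. y \<in> Y \<Longrightarrow> st x y \<in> Y"
    and canc: "\<And>a b y. y \<in> Y \<Longrightarrow> st (a, \<not> b) (st (a, b) y) = y"
    and rel: "\<And>r y. r \<in> R \<Longrightarrow> y \<in> Y \<Longrightarrow> fold st r y = y"
  shows "pres_eq R u v \<Longrightarrow> \<forall>y\<in>Y. fold st u y = fold st v y"
proof (induction rule: pres_eq.induct)
  have FY: "\<And>w y. y \<in> Y \<Longrightarrow> fold st w y \<in> Y"
  proof -
    fix w y assume "y \<in> Y" then show "fold st w y \<in> Y" by (induction w arbitrary: y) (auto simp: Y)
  qed
  {
  case (pres_cancel u a b v)
  show ?case using canc FY by simp
  next
  case (pres_rel r u v)
  show ?case using rel[OF pres_rel] FY by simp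
  }
qed auto

lemma mod_facts:
  assumes "i < (m::nat)"
  shows "(Suc i mod m + m - 1) mod m = i" "Suc ((i + m - 1) mod m) mod m = i"
proof -
  show "(Suc i mod m + m - 1) mod m = i"
  proof (cases "Suc i = m")
    case True then show ?thesis using assms by simp
  next
    case False then have "Suc i mod m = Suc i" using assms by simp
    then show ?thesis using assms by simp
  qed
  show "Suc ((i + m - 1) mod m) mod m = i"
  proof (cases "i = 0")
    case True
    then have "(i + m - 1) mod m = m - 1" using assms by simp
    moreover have "Suc (m - 1) = m" using assms by simp
    ultimately show ?thesis using True by simp
  next
    case False
    have e: "i + m - 1 = (i - 1) + m" using False by simp
    have "(i + m - 1) mod m = ((i - 1) + m) mod m" by (simp only: e)
    also have "\<dots> = i - 1" using assms by simp
    finally have "(i + m - 1) mod m = i - 1" .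
    moreover have "Suc (i - 1) = i" using False by simp
    ultimately show ?thesis using assms by simp
  qed
qed

lemma fold_tp:
  assumes "i < m"
  shows "fold (stp m F) (replicate k (1, False)) (i, z) = ((i + k) mod m, z)"
  using assms
proof (induction k arbitrary: i)
  case 0 then show ?case by simp
next
  case (Suc k)
  have "Suc i mod m < m" using Suc by simp
  then show ?case using Suc.IH[of "Suc i mod m"] by (simp add: stp_def mod_add_left_eq)
qed

lemma fold_B:
  assumes "i < m"
  shows "fold (stp m F) [(0, False), (1, True), (0, False), (1, False)] (i, z)
        = (i, F ((i + m - 1) mod m) (F i z))"
  using assms mod_facts[OF assms] by (simp add: stp_def)

lemma fold_Bn:
  assumes "i < m"
  shows "fold (stp m F) (concat (replicate k [(0, False), (1, True), (0, False), (1, False)])) (i, z)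
        = (i, ((F ((i + m - 1) mod m) \<circ> F i) ^^ k) z)"
proof (induction k arbitrary: z)
  case 0 then show ?case by simp
next
  case (Suc k)
  show ?case using Suc fold_B[OF assms] by (simp add: funpow_Suc_right del: funpow.simps)
qed

lemma act_pres:
  assumes m: "1 \<le> m" and inv: "\<And>i z. F i (F i z) = z"
    and pw: "\<And>i. i < m \<Longrightarrow> (F ((i + m - 1) mod m) \<circ> F i) ^^ n = id"
    and pe: "pres_eq (G_rels m n) u v" and i: "i < m"
  shows "fold (stp m F) u (i, z) = fold (stp m F) v (i, z)"
proof -
  let ?Y = "{y. fst y < m}"
  have "\<forall>y\<in>?Y. fold (stp m F) u y = fold (stp m F) v y"
  proof (rule act_pres_gen[OF _ _ _ pe])
    fix x and y :: "nat \<times> complex" assume "y \<in> ?Y" then show "stp m F x y \<in> ?Y" using m by (auto simp: stp_def)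
  next
    fix a b and y :: "nat \<times> complex" assume "y \<in> ?Y"
    then show "stp m F (a, \<not> b) (stp m F (a, b) y) = y"
      using mod_facts[of "fst y" m] inv by (cases b) (auto simp: stp_def)
  next
    fix r and y :: "nat \<times> complex" assume r: "r \<in> G_rels m n" and y: "y \<in> ?Y"
    obtain j z where yy: "y = (j, z)" by force
    have j: "j < m" using y yy by simp
    from r consider "r = [(0, False), (0, False)]" | "r = replicate m (1, False)"
      | "r = concat (replicate n [(0, False), (1, True), (0, False), (1, False)])"
      unfolding G_rels_def by blast
    then show "fold (stp m F) r y = y"
    proof cases
      case 1 then show ?thesis using inv by (simp add: yy stp_def)
    next
      case 2 then show ?thesis using fold_tp[OF j, of F m z] j by (simp add: yy)
    next
      case 3 then show ?thesis using fold_Bn[OF j, of F n z] pw[OF j] by (simp add: yy)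
    qed
  qed
  then show ?thesis using i by simp
qed

lemma infinite_G:
  fixes F :: "nat \<Rightarrow> complex \<Rightarrow> complex" and c :: complex
  assumes m: "3 \<le> m" and inv: "\<And>i z. F i (F i z) = z"
    and pw: "\<And>i. i < m \<Longrightarrow> (F ((i + m - 1) mod m) \<circ> F i) ^^ n = id"
    and tr: "\<And>z. F 0 (F 1 (F 2 (F 1 z))) = z + c" and c: "c \<noteq> 0"
  shows "infinite (carrier (presented_group G_gens (G_rels m n)))"
proof
  assume fin: "finite (carrier (presented_group G_gens (G_rels m n)))"
  define u :: "nat word" where "u = [(0,False),(1,False),(0,False),(1,True),(0,False),(1,True),(0,False),(1,False)]"
  have uw: "concat (replicate k u) \<in> words_on G_gens" for k
    by (rule words_on_concat_replicate) (simp add: u_def G_gens_def)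
  have m1: "(2 + m - 1) mod m = 1" "(1 + m - 1) mod m = 0" "Suc 1 mod m = 2" "Suc 0 mod m = 1"
    using m by (simp_all add: mod_Suc)
  have fu: "fold (stp m F) u (1, z) = (1, z + c)" for z
    using m1 tr by (simp add: u_def stp_def)
  have fuk: "fold (stp m F) (concat (replicate k u)) (1, z) = (1, z + of_nat k * c)" for k z
  proof (induction k arbitrary: z)
    case (Suc k) then show ?case using fu by (simp add: algebra_simps)
  qed simp
  define f where "f k = pclass G_gens (G_rels m n) (concat (replicate k u))" for k
  have inj: "inj f"
  proof (rule injI)
    fix j k assume "f j = f k"
    then have "pres_eq (G_rels m n) (concat (replicate j u)) (concat (replicate k u))"
      unfolding f_def using pclass_eq uw by blast
    then have "fold (stp m F) (concat (replicate j u)) (1, 0) = fold (stp m F) (concat (replicate k u)) (1, 0)"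
      using act_pres[of m F n, OF _ inv pw] m by auto
    then have "of_nat j * c = of_nat k * c" using fuk[of j 0] fuk[of k 0] by simp
    then show "j = k" using c by simp
  qed
  have "range f \<subseteq> carrier (presented_group G_gens (G_rels m n))"
    using uw by (auto simp: f_def carrier_pg)
  then have "finite (range f)" using fin finite_subset by blast
  then have "finite (UNIV :: nat set)" using finite_imageD inj by blast
  then show False by simp
qed


lemma aff_pow:
  fixes g :: "complex \<Rightarrow> complex"
  assumes g: "\<And>z. g z = \<omega> * z + c" and w1: "\<omega> ^ n = 1" and w2: "\<omega> \<noteq> 1"
  shows "g ^^ n = id"
proof -
  have k: "(g ^^ k) z = \<omega> ^ k * z + c * (\<Sum>j<k. \<omega> ^ j)" for k z
  proof (induction k arbitrary: z)
    case (Suc k)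
    have "(g ^^ Suc k) z = (g ^^ k) (g z)" by (simp only: funpow_Suc_right o_apply)
    also have "\<dots> = \<omega> ^ k * (g z) + c * (\<Sum>j<k. \<omega> ^ j)" by (rule Suc)
    also have "\<dots> = \<omega> ^ Suc k * z + c * (\<Sum>j<Suc k. \<omega> ^ j)" by (simp add: g algebra_simps)
    finally show ?case .
  qed simp
  have "(\<Sum>j<n. \<omega> ^ j) = 0" using geometric_sum[OF w2, of n] w1 by simp
  then show ?thesis using k w1 by (simp add: fun_eq_iff)
qed

lemma inst_big:
  assumes m: "3 \<le> m" and n: "3 \<le> n"
  shows "infinite (carrier (presented_group G_gens (G_rels m n)))"
proof -
  define \<zeta> where "\<zeta> = cis (2 * pi / n)"
  have n0: "real n > 0" using n by simp
  have zn: "\<zeta> ^ n = 1" using n0 by (simp add: \<zeta>_def DeMoivre)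
  have z1: "\<zeta> * cnj \<zeta> = 1" by (simp add: \<zeta>_def cis_cnj cis_mult)
  have z0: "\<zeta> \<noteq> 0" using z1 by auto
  have cz: "cnj \<zeta> = inverse \<zeta>" using z1 z0 by (simp add: field_simps)
  have im: "Im \<zeta> > 0"
  proof -
    have "2 * pi / n < pi" using n by (simp add: field_simps)
    moreover have "0 < 2 * pi / n" using n0 by simp
    ultimately show ?thesis by (simp add: \<zeta>_def sin_gt_zero)
  qed
  have ne1: "\<zeta> \<noteq> 1" using im by auto
  have ne2: "cnj \<zeta> \<noteq> 1" using ne1 by (metis complex_cnj_one complex_cnj_cnj)
  have ne3: "\<zeta> ^ 2 \<noteq> 1"
  proof
    assume "\<zeta> ^ 2 = 1"
    then have "\<zeta> = 1 \<or> \<zeta> = -1" using power2_eq_1_iff by blast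
    then show False using im by auto
  qed
  have pn2: "cnj \<zeta> ^ n = 1" using zn by (metis complex_cnj_one complex_cnj_power)
  have pn3: "(\<zeta> ^ 2) ^ n = 1" using zn by (metis power_mult power_mult_distrib mult.commute power_one)
  define f0 :: "complex \<Rightarrow> complex" where "f0 z = cnj z" for z
  define f1 :: "complex \<Rightarrow> complex" where "f1 z = \<zeta> * cnj z + (1 - \<zeta>)" for z
  define f2 :: "complex \<Rightarrow> complex" where "f2 z = \<zeta>^2 * cnj z" for z
  define F :: "nat \<Rightarrow> complex \<Rightarrow> complex" where
    "F i = (if i = 0 then f0 else if odd i then f1 else f2)" for i
  have inv: "F i (F i z) = z" for i z
    using z1 by (auto simp: F_def f0_def f1_def f2_def algebra_simps power2_eq_square)
  have c10: "(f1 \<circ> f0) ^^ n = id"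
    by (rule aff_pow[where \<omega>=\<zeta> and c="1 - \<zeta>"]) (auto simp: f0_def f1_def zn ne1)
  have c20: "(f2 \<circ> f0) ^^ n = id"
    by (rule aff_pow[where \<omega>="\<zeta>^2" and c=0]) (auto simp: f0_def f2_def pn3 ne3)
  have c01: "(f0 \<circ> f1) ^^ n = id"
    by (rule aff_pow[where \<omega>="cnj \<zeta>" and c="1 - cnj \<zeta>"]) (auto simp: f0_def f1_def pn2 ne2 ne1)
  have c21: "(f2 \<circ> f1) ^^ n = id"
    by (rule aff_pow[where \<omega>="\<zeta>" and c="\<zeta>^2 * (1 - cnj \<zeta>)"])
      (simp_all add: f2_def f1_def zn ne1, simp add: cz z0 field_simps power2_eq_square)
  have c12: "(f1 \<circ> f2) ^^ n = id"
    by (rule aff_pow[where \<omega>="cnj \<zeta>" and c="1 - \<zeta>"])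
      (simp_all add: f2_def f1_def pn2 ne2 ne1, simp add: cz z0 field_simps power2_eq_square)
  have pw: "(F ((i + m - 1) mod m) \<circ> F i) ^^ n = id" if i: "i < m" for i
  proof (cases "i = 0")
    case True
    have j: "(i + m - 1) mod m = m - 1" "m - 1 \<noteq> 0" using True m by auto
    show ?thesis using c10 c20 j True by (cases "odd (m - 1)") (auto simp: F_def)
  next
    case False
    have e: "i + m - 1 = (i - 1) + m" using False by simp
    have "(i + m - 1) mod m = ((i - 1) + m) mod m" by (simp only: e)
    also have "\<dots> = i - 1" using i by simp
    finally have j: "(i + m - 1) mod m = i - 1" .
    show ?thesis
    proof (cases "i = 1")
      case True then show ?thesis using j c01 by (simp add: F_def)
    next
      case False
      then have i2: "i \<ge> 2" using \<open>i \<noteq> 0\<close> by simp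
      show ?thesis
      proof (cases "odd i")
        case True
        then have "even (i - 1)" "i - 1 \<noteq> 0" using i2 by auto
        then show ?thesis using j c21 True i2 by (simp add: F_def)
      next
        case False
        then have "odd (i - 1)" "i - 1 \<noteq> 0" using i2 by auto
        then show ?thesis using j c12 False i2 by (simp add: F_def)
      qed
    qed
  qed
  have tr: "F 0 (F 1 (F 2 (F 1 z))) = z + (\<zeta> - cnj \<zeta>)" for z
    by (simp add: F_def f0_def f1_def f2_def cz z0 field_simps power2_eq_square)
  have c: "\<zeta> - cnj \<zeta> \<noteq> 0"
  proof
    assume "\<zeta> - cnj \<zeta> = 0"
    then have "Im (\<zeta> - cnj \<zeta>) = 0" by simp
    then show False using im by simp
  qed
  show ?thesis by (rule infinite_G[OF m inv pw tr c])
qed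

lemma inst_small:
  assumes m: "4 \<le> m"
  shows "infinite (carrier (presented_group G_gens (G_rels m 2)))"
proof -
  define F :: "nat \<Rightarrow> complex \<Rightarrow> complex" where
    "F i z = (if i = 0 then - z else if i = 2 then 2 - z else z)" for i z
  have inv: "F i (F i z) = z" for i z by (simp add: F_def)
  have pw: "(F ((i + m - 1) mod m) \<circ> F i) ^^ 2 = id" if i: "i < m" for i
  proof -
    have j: "(i + m - 1) mod m = (if i = 0 then m - 1 else i - 1)"
    proof (cases "i = 0")
      case True then show ?thesis using m by simp
    next
      case False
      have e: "i + m - 1 = (i - 1) + m" using False by simp
      have "(i + m - 1) mod m = ((i - 1) + m) mod m" by (simp only: e)
      also have "\<dots> = i - 1" using i by simp
      finally show ?thesis using False by simp
    qed
    have "F ((i + m - 1) mod m) = id \<or> F i = id"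
      using j m by (auto simp: F_def fun_eq_iff)
    then show ?thesis using inv by (auto simp: numeral_2_eq_2 fun_eq_iff)
  qed
  have tr: "F 0 (F 1 (F 2 (F 1 z))) = z + (-2)" for z by (simp add: F_def)
  show ?thesis by (rule infinite_G[OF _ inv pw tr]) (use m in auto)
qed


lemma pres_rw: "pres_eq R u v \<Longrightarrow> x = p @ u @ q \<Longrightarrow> pres_eq R x (p @ v @ q)"
  using pres_app by blast

lemma finite_closure:
  assumes m: "1 \<le> m" and fin: "finite W" and Ww: "W \<subseteq> words_on G_gens" and e: "[] \<in> W"
    and cs: "\<And>v. v \<in> W \<Longrightarrow> \<exists>v'\<in>W. pres_eq (G_rels m n) (v @ [(0,False)]) v'"
    and ct: "\<And>v. v \<in> W \<Longrightarrow> \<exists>v'\<in>W. pres_eq (G_rels m n) (v @ [(1,False)]) v'"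
  shows "finite (carrier (presented_group G_gens (G_rels m n)))"
proof -
  let ?R = "G_rels m n"
  have ctk: "\<exists>v'\<in>W. pres_eq ?R (v @ tp k) v'" if "v \<in> W" for k v
  proof (induction k)
    case 0 then show ?case using that pres_refl by force
  next
    case (Suc k)
    then obtain v' where v': "v' \<in> W" "pres_eq ?R (v @ tp k) v'" by blast
    obtain v'' where v'': "v'' \<in> W" "pres_eq ?R (v' @ [(1,False)]) v''" using ct[OF v'(1)] by blast
    have "v @ tp (Suc k) = (v @ tp k) @ [(1,False)]" by (simp add: replicate_append_same)
    also have "pres_eq ?R \<dots> (v' @ [(1,False)])" by (rule pres_app2[OF v'(2) pres_refl])
    also have "pres_eq ?R \<dots> v''" by (rule v''(2))
    finally show ?case using v'' by blast
  qed
  have s': "pres_eq ?R [(0,True)] [(0,False)]"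
  proof -
    have "pres_eq ?R [(0,True)] ([(0,True)] @ [(0,False),(0,False)] @ [])"
      using pres_app[OF pres_rel0[OF G_mem(1)], where p="[(0,True)]" and q="[]"] by (simp add: pres_sym_iff)
    also have "pres_eq ?R \<dots> ([] @ [] @ [(0,False)])"
      using pres_cancel0[of ?R 0 True] pres_app by (metis append.left_neutral append_Cons)
    finally show ?thesis by simp
  qed
  have t': "pres_eq ?R [(1,True)] (tp (m - 1))"
  proof -
    have "pres_eq ?R [(1,True)] ([(1,True)] @ tp m @ [])"
      using pres_app[OF pres_rel0[OF G_mem(2)], where p="[(1,True)]" and q="[]"] by (simp add: pres_sym_iff)
    also have "[(1,True)] @ tp m @ [] = [] @ [(1,True),(1,False)] @ tp (m - 1)"
      using m by (cases m) auto
    also have "pres_eq ?R \<dots> ([] @ [] @ tp (m - 1))"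
      by (rule pres_rw[OF pres_cancel0[of ?R 1 True]]) simp
    finally show ?thesis by simp
  qed
  have main: "\<exists>v\<in>W. pres_eq ?R w v" if "w \<in> words_on G_gens" for w
    using that
  proof (induction w rule: rev_induct)
    case Nil then show ?case using e pres_refl by blast
  next
    case (snoc x w)
    then obtain v where v: "v \<in> W" "pres_eq ?R w v" by auto
    obtain a b where x: "x = (a, b)" by force
    have a: "a = 0 \<or> a = 1" using snoc x by (auto simp: words_on_def G_gens_def)
    have wx: "pres_eq ?R (w @ [x]) (v @ [x])" by (rule pres_app2[OF v(2) pres_refl])
    have "\<exists>v'\<in>W. pres_eq ?R (v @ [x]) v'"
    proof -
      consider "x = (0, False)" | "x = (0, True)" | "x = (1, False)" | "x = (1, True)"
        using a x by (cases b) auto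
      then show ?thesis
      proof cases
        case 1 then show ?thesis using cs[OF v(1)] by simp
      next
        case 2 then show ?thesis using cs[OF v(1)] pres_app2[OF pres_refl[of ?R v] s']
          by (meson pres_trans)
      next
        case 3 then show ?thesis using ct[OF v(1)] by simp
      next
        case 4 then show ?thesis using ctk[OF v(1), of "m - 1"] pres_app2[OF pres_refl[of ?R v] t']
          by (meson pres_trans)
      qed
    qed
    then show ?case using wx pres_trans by blast
  qed
  have "carrier (presented_group G_gens ?R) \<subseteq> pclass G_gens ?R ` W"
  proof
    fix A assume "A \<in> carrier (presented_group G_gens ?R)"
    then obtain w where w: "w \<in> words_on G_gens" "A = pclass G_gens ?R w" by (auto simp: carrier_pg)
    then obtain v where v: "v \<in> W" "pres_eq ?R w v" using main by blast
    have "A = pclass G_gens ?R v" using w v Ww pclass_eq by blast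
    then show "A \<in> pclass G_gens ?R ` W" using v by blast
  qed
  then show ?thesis using fin finite_subset by blast
qed

lemma fin_m1: "finite (carrier (presented_group G_gens (G_rels 1 n)))"
proof (rule finite_closure[where W = "{[], [(0,False)]}"])
  let ?R = "G_rels 1 n"
  have t: "pres_eq ?R [(1, False)] []" using pres_rel0[OF G_mem(2)[of 1 n]] by simp
  show "\<exists>v'\<in>{[], [(0,False)]}. pres_eq ?R (v @ [(0,False)]) v'" if "v \<in> {[], [(0,False)]}" for v
    using that pres_rel0[OF G_mem(1)[of 1 n]] by (force intro: pres_refl)
  show "\<exists>v'\<in>{[], [(0,False)]}. pres_eq ?R (v @ [(1,False)]) v'" if "v \<in> {[], [(0,False)]}" for v
    using that t pres_app[OF t, where p="[(0,False)]" and q="[]"] by auto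
qed (auto simp: G_gens_def)

lemma fin_n1:
  assumes m: "1 \<le> m"
  shows "finite (carrier (presented_group G_gens (G_rels m 1)))"
proof -
  let ?R = "G_rels m 1"
  let ?s = "(0::nat, False)" and ?t = "(1::nat, False)" and ?t' = "(1::nat, True)"
  define W where "W = (\<lambda>j. tp j) ` {..<m} \<union> (\<lambda>j. ?s # tp j) ` {..<m}"
  have B: "pres_eq ?R [?s, ?t', ?s, ?t] []" using pres_rel0[OF G_mem(3)[of 1 m]] by simp
  have ts: "pres_eq ?R [?t, ?s] [?s, ?t]"
  proof -
    have "pres_eq ?R [?t, ?s] ([?t, ?s] @ [?s, ?t', ?s, ?t] @ [])"
      using pres_app[OF B, where p="[?t, ?s]" and q="[]"] by (simp add: pres_sym_iff)
    also have "pres_eq ?R \<dots> ([?t] @ [] @ [?t', ?s, ?t])"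
      by (rule pres_rw[OF pres_rel0[OF G_mem(1)]]) simp
    also have "pres_eq ?R \<dots> ([] @ [] @ [?s, ?t])"
      by (rule pres_rw[OF pres_cancel0[of ?R 1 False]]) simp
    finally show ?thesis by simp
  qed
  have tps: "pres_eq ?R (tp j @ [?s]) (?s # tp j)" for j
  proof (induction j)
    case 0 then show ?case by (simp add: pres_refl)
  next
    case (Suc j)
    have "tp (Suc j) @ [?s] = tp j @ [?t, ?s] @ []" by (simp add: replicate_append_same[symmetric])
    also have "pres_eq ?R \<dots> (tp j @ [?s, ?t] @ [])" by (rule pres_app[OF ts])
    also have "\<dots> = (tp j @ [?s]) @ [?t]" by simp
    also have "pres_eq ?R \<dots> ((?s # tp j) @ [?t])" by (rule pres_app2[OF Suc pres_refl])
    also have "\<dots> = ?s # tp (Suc j)" by (simp add: replicate_append_same)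
    finally show ?case .
  qed
  have tm: "pres_eq ?R (p @ tp m) p" for p using pres_app[OF G_tm(1), where p=p and q="[]"] by simp
  show ?thesis
  proof (rule finite_closure[OF m, where W=W])
    show "\<exists>v'\<in>W. pres_eq ?R (v @ [?s]) v'" if "v \<in> W" for v
    proof -
      from that obtain j where j: "j < m" "v = tp j \<or> v = ?s # tp j" by (auto simp: W_def)
      from j(2) show ?thesis
      proof
        assume "v = tp j" then show ?thesis using tps[of j] j by (auto simp: W_def)
      next
        assume v: "v = ?s # tp j"
        have "pres_eq ?R (v @ [?s]) ([?s] @ (?s # tp j) @ [])" using pres_app[OF tps[of j], where p="[?s]" and q="[]"] v by simp
        also have "pres_eq ?R \<dots> ([] @ [] @ tp j)" by (rule pres_rw[OF pres_rel0[OF G_mem(1)]]) simp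
        finally show ?thesis using j by (auto simp: W_def)
      qed
    qed
    show "\<exists>v'\<in>W. pres_eq ?R (v @ [?t]) v'" if "v \<in> W" for v
    proof -
      from that obtain j where j: "j < m" "v = tp j \<or> v = ?s # tp j" by (auto simp: W_def)
      have e: "tp j @ [?t] = tp (Suc j)" by (simp add: replicate_append_same)
      show ?thesis
      proof (cases "Suc j < m")
        case True
        have w: "tp (Suc j) \<in> W" "?s # tp (Suc j) \<in> W" using True unfolding W_def
          by (intro UnI1 UnI2 imageI, simp)+
        have "v @ [?t] = tp (Suc j) \<or> v @ [?t] = ?s # tp (Suc j)" using j(2) e by auto
        then show ?thesis using w pres_refl by metis
      next
        case False then have sj: "Suc j = m" using j by simp
        have 1: "pres_eq ?R (tp j @ [?t]) (tp 0)" using tm[of "[]"] e sj by simp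
        have 2: "pres_eq ?R ((?s # tp j) @ [?t]) (?s # tp 0)" using tm[of "[?s]"] e sj by simp
        show ?thesis using j 1 2 m by (auto simp: W_def)
      qed
    qed
    have "tp 0 \<in> (\<lambda>j. tp j) ` {..<m}" using m by (intro imageI) simp
    then show "[] \<in> W" unfolding W_def by simp
  qed (auto simp: W_def G_gens_def)
qed


lemma concat_rep_snoc: "concat (replicate (Suc k) x) = concat (replicate k x) @ x"
  by (induction k) auto

lemma concat_rep_double: "concat (replicate n (x @ x)) = concat (replicate (2 * n) x)"
  by (induction n) auto

lemma fin_m2:
  assumes n: "1 \<le> n"
  shows "finite (carrier (presented_group G_gens (G_rels 2 n)))"
proof -
  let ?R = "G_rels 2 n"
  let ?s = "(0::nat, False)" and ?t = "(1::nat, False)" and ?t' = "(1::nat, True)"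
  define P where "P k = concat (replicate k [?s, ?t])" for k
  have PS: "P (Suc k) = P k @ [?s, ?t]" for k by (simp add: P_def concat_rep_snoc del: replicate.simps)
  have tt: "pres_eq ?R (p @ [?t, ?t] @ q) (p @ q)" for p q
    using pres_app[OF pres_rel0[OF G_mem(2)[of 2 n]], where p=p and q=q] by (simp add: numeral_2_eq_2)
  have ss: "pres_eq ?R (p @ [?s, ?s] @ q) (p @ q)" for p q
    using pres_app[OF pres_rel0[OF G_mem(1)[of 2 n]], where p=p and q=q] by simp
  have t': "pres_eq ?R [?t'] [?t]"
  proof -
    have "pres_eq ?R [?t'] ([?t'] @ [?t, ?t] @ [])" using tt[of "[?t']" "[]"] by (simp add: pres_sym_iff)
    also have "pres_eq ?R \<dots> ([] @ [] @ [?t])" by (rule pres_rw[OF pres_cancel0[of ?R 1 True]]) simp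
    finally show ?thesis by simp
  qed
  have P2n: "pres_eq ?R (P (2 * n)) []"
  proof -
    have "P (2 * n) = concat (replicate n [?s, ?t, ?s, ?t])"
      using concat_rep_double[of n "[?s, ?t]"] by (simp add: P_def)
    also have "pres_eq ?R \<dots> (concat (replicate n [?s, ?t', ?s, ?t]))"
      by (rule pres_rep, rule pres_sub[OF t'[THEN pres_sym], where p="[?s]" and q="[?s, ?t]"]) simp_all
    also have "pres_eq ?R \<dots> []" by (rule pres_rel0[OF G_mem(3)])
    finally show ?thesis .
  qed
  define W where "W = P ` {..<2*n} \<union> (\<lambda>k. P k @ [?s]) ` {..<2*n}"
  have inW: "P k \<in> W" "P k @ [?s] \<in> W" if "k < 2 * n" for k
    using that unfolding W_def by (intro UnI1 UnI2 imageI, simp)+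
  have Pw: "P k \<in> words_on G_gens" for k
    unfolding P_def by (rule words_on_concat_replicate) (simp add: G_gens_def)
  have P0: "[] \<in> W" using inW(1)[of 0] n by (simp add: P_def)
  show ?thesis
  proof (rule finite_closure[where W=W])
    show "\<exists>v'\<in>W. pres_eq ?R (v @ [?s]) v'" if "v \<in> W" for v
    proof -
      from that obtain k where k: "k < 2 * n" "v = P k \<or> v = P k @ [?s]" by (auto simp: W_def)
      from k(2) show ?thesis
      proof
        assume "v = P k" then show ?thesis using inW[OF k(1)] pres_refl by blast
      next
        assume "v = P k @ [?s]"
        then have "pres_eq ?R (v @ [?s]) (P k)" using ss[of "P k" "[]"] by simp
        then show ?thesis using inW[OF k(1)] by blast
      qed
    qed
    show "\<exists>v'\<in>W. pres_eq ?R (v @ [?t]) v'" if "v \<in> W" for v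
    proof -
      from that obtain k where k: "k < 2 * n" "v = P k \<or> v = P k @ [?s]" by (auto simp: W_def)
      from k(2) show ?thesis
      proof
        assume v: "v = P k @ [?s]"
        then have e: "v @ [?t] = P (Suc k)" by (simp add: PS)
        show ?thesis
        proof (cases "Suc k < 2 * n")
          case True then show ?thesis using e inW pres_refl by metis
        next
          case False then have "Suc k = 2 * n" using k by simp
          then have "pres_eq ?R (v @ [?t]) (P 0)" using e P2n by (simp add: P_def)
          then show ?thesis using inW[of 0] n by auto
        qed
      next
        assume v: "v = P k"
        show ?thesis
        proof (cases k)
          case 0
          have k1: "2 * n - 1 < 2 * n" using n by simp
          have "pres_eq ?R (v @ [?t]) (P (2 * n) @ [?t])" using P2n pres_app2[OF P2n[THEN pres_sym] pres_refl[of ?R "[?t]"]] v 0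
            by (simp add: P_def)
          also have "P (2 * n) = P (2 * n - 1) @ [?s] @ [?t]" using PS[of "2 * n - 1"] n by simp
          also have "pres_eq ?R ((P (2 * n - 1) @ [?s] @ [?t]) @ [?t]) (P (2 * n - 1) @ [?s])"
            using tt[of "P (2 * n - 1) @ [?s]" "[]"] by simp
          finally show ?thesis using inW(2)[OF k1] by blast
        next
          case (Suc k')
          have "v @ [?t] = (P k' @ [?s]) @ [?t, ?t] @ []" using v Suc by (simp add: PS)
          also have "pres_eq ?R \<dots> (P k' @ [?s])" using tt[of "P k' @ [?s]" "[]"] by simp
          finally show ?thesis using inW(2)[of k'] Suc k by auto
        qed
      qed
    qed
  qed (use n Pw P0 in \<open>auto simp: W_def G_gens_def\<close>)
qed


lemma comm_from_rel:
  assumes "pres_eq R (x @ y @ x @ y) []" "pres_eq R (x @ x) []" "pres_eq R (y @ y) []"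
  shows "pres_eq R (x @ y) (y @ x)"
proof -
  have "pres_eq R (y @ x) ((y @ x) @ (x @ y @ x @ y) @ [])"
    using pres_app[OF assms(1), where p="y @ x" and q="[]"] by (simp add: pres_sym_iff)
  also have "\<dots> = y @ (x @ x) @ (y @ x @ y)" by simp
  also have "pres_eq R \<dots> (y @ [] @ (y @ x @ y))" by (rule pres_app[OF assms(2)])
  also have "\<dots> = [] @ (y @ y) @ (x @ y)" by simp
  also have "pres_eq R \<dots> ([] @ [] @ (x @ y))" by (rule pres_app[OF assms(3)])
  finally show ?thesis by (simp add: pres_sym_iff)
qed

lemma fin_32: "finite (carrier (presented_group G_gens (G_rels 3 2)))"
proof -
  let ?R = "G_rels 3 2"
  let ?s = "(0::nat, False)" and ?t = "(1::nat, False)" and ?t' = "(1::nat, True)"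
  define a where "a = [?t', ?s, ?t]"
  define b where "b = [?t, ?s, ?t']"
  note rw = pres_rw[of ?R]
  have ss: "pres_eq ?R (p @ [?s, ?s] @ q) (p @ q)" for p q
    using pres_app[OF pres_rel0[OF G_mem(1)[of 3 2]], where p=p and q=q] by simp
  have ttt: "pres_eq ?R (p @ [?t, ?t, ?t] @ q) (p @ q)" for p q
    using pres_app[OF pres_rel0[OF G_mem(2)[of 3 2]], where p=p and q=q] by (simp add: numeral_3_eq_3)
  have c1: "pres_eq ?R (p @ [?t, ?t'] @ q) (p @ q)" for p q
    using pres_app[OF pres_cancel0[of ?R 1 False], where p=p and q=q] by simp
  have c2: "pres_eq ?R (p @ [?t', ?t] @ q) (p @ q)" for p q
    using pres_app[OF pres_cancel0[of ?R 1 True], where p=p and q=q] by simp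
  have tt: "pres_eq ?R [?t, ?t] [?t']"
  proof -
    have "pres_eq ?R [?t, ?t] ([?t, ?t] @ [?t, ?t'] @ [])" using c1[of "[?t, ?t]" "[]"] by (simp add: pres_sym_iff)
    also have "\<dots> = [] @ [?t, ?t, ?t] @ [?t']" by simp
    also have "pres_eq ?R \<dots> ([] @ [?t'])" by (rule ttt)
    finally show ?thesis by simp
  qed
  have t't': "pres_eq ?R [?t', ?t'] [?t]"
  proof -
    have "pres_eq ?R [?t', ?t'] ([?t', ?t'] @ [?t, ?t, ?t] @ [])" using ttt[of "[?t', ?t']" "[]"] by (simp add: pres_sym_iff)
    also have "\<dots> = [?t'] @ [?t', ?t] @ [?t, ?t]" by simp
    also have "pres_eq ?R \<dots> ([?t'] @ [?t, ?t])" by (rule c2)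
    also have "\<dots> = [] @ [?t', ?t] @ [?t]" by simp
    also have "pres_eq ?R \<dots> ([] @ [?t])" by (rule c2)
    finally show ?thesis by simp
  qed
  have aa: "pres_eq ?R (a @ a) []"
  proof -
    have "a @ a = [?t', ?s] @ [?t, ?t'] @ [?s, ?t]" by (simp add: a_def)
    also have "pres_eq ?R \<dots> ([?t'] @ [?s, ?s] @ [?t])" using c1[of "[?t', ?s]" "[?s, ?t]"] by simp
    also have "pres_eq ?R \<dots> ([] @ [?t', ?t] @ [])" using ss[of "[?t']" "[?t]"] by simp
    also have "pres_eq ?R \<dots> ([] @ [])" by (rule c2)
    finally show ?thesis by simp
  qed
  have bb: "pres_eq ?R (b @ b) []"
  proof -
    have "b @ b = [?t, ?s] @ [?t', ?t] @ [?s, ?t']" by (simp add: b_def)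
    also have "pres_eq ?R \<dots> ([?t] @ [?s, ?s] @ [?t'])" using c2[of "[?t, ?s]" "[?s, ?t']"] by simp
    also have "pres_eq ?R \<dots> ([] @ [?t, ?t'] @ [])" using ss[of "[?t]" "[?t']"] by simp
    also have "pres_eq ?R \<dots> ([] @ [])" by (rule c1)
    finally show ?thesis by simp
  qed
  have sasa: "pres_eq ?R ([?s] @ a @ [?s] @ a) []"
    using pres_rel0[OF G_mem(3)[of 2 3]] by (simp add: a_def numeral_2_eq_2)
  define C where "C w = [?t'] @ w @ [?t]" for w
  have Capp: "pres_eq ?R (C (x @ y)) (C x @ C y)" for x y
  proof -
    have "C (x @ y) = ([?t'] @ x) @ [] @ (y @ [?t])" by (simp add: C_def)
    also have "pres_eq ?R \<dots> (([?t'] @ x) @ [?t, ?t'] @ (y @ [?t]))" using c1[of "[?t'] @ x" "y @ [?t]"] by (simp add: pres_sym_iff)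
    finally show ?thesis by (simp add: C_def)
  qed
  have Ccong: "pres_eq ?R x y \<Longrightarrow> pres_eq ?R (C x) (C y)" for x y
    unfolding C_def by (rule pres_app)
  have Ctriv: "pres_eq ?R x [] \<Longrightarrow> pres_eq ?R (C x) []" for x
    using Ccong[of x "[]"] c2[of "[]" "[]"] by (simp add: C_def) (meson pres_trans)
  have Cs: "C [?s] = a" by (simp add: C_def a_def)
  have Ca: "pres_eq ?R (C a) b"
  proof -
    have "C a = [] @ [?t', ?t'] @ [?s, ?t, ?t]" by (simp add: C_def a_def)
    also have "pres_eq ?R \<dots> ([] @ [?t] @ [?s, ?t, ?t])" by (rule pres_app[OF t't'])
    also have "\<dots> = [?t, ?s] @ [?t, ?t] @ []" by simp
    also have "pres_eq ?R \<dots> ([?t, ?s] @ [?t'] @ [])" by (rule pres_app[OF tt])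
    finally show ?thesis by (simp add: b_def)
  qed
  have Cb: "pres_eq ?R (C b) [?s]"
  proof -
    have "C b = [] @ [?t', ?t] @ ([?s] @ [?t', ?t])" by (simp add: C_def b_def)
    also have "pres_eq ?R \<dots> ([] @ ([?s] @ [?t', ?t]))" by (rule c2)
    also have "\<dots> = [?s] @ [?t', ?t] @ []" by simp
    also have "pres_eq ?R \<dots> ([?s] @ [])" by (rule c2)
    finally show ?thesis by simp
  qed
  have C4: "pres_eq ?R (C (w1 @ w2 @ w3 @ w4)) (C w1 @ C w2 @ C w3 @ C w4)" for w1 w2 w3 w4
  proof -
    have "pres_eq ?R (C (w1 @ w2 @ w3 @ w4)) (C w1 @ C (w2 @ w3 @ w4))" by (rule Capp)
    also have "pres_eq ?R \<dots> (C w1 @ (C w2 @ C (w3 @ w4)))" by (rule pres_app2[OF pres_refl Capp])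
    also have "pres_eq ?R \<dots> (C w1 @ (C w2 @ (C w3 @ C w4)))"
      by (rule pres_app2[OF pres_refl pres_app2[OF pres_refl Capp]])
    finally show ?thesis by simp
  qed
  have p4: "pres_eq ?R (x1 @ x2 @ x3 @ x4) (y1 @ y2 @ y3 @ y4)"
    if "pres_eq ?R x1 y1" "pres_eq ?R x2 y2" "pres_eq ?R x3 y3" "pres_eq ?R x4 y4" for x1 x2 x3 x4 y1 y2 y3 y4
    using that by (intro pres_app2)
  have abab: "pres_eq ?R (a @ b @ a @ b) []"
  proof -
    have "pres_eq ?R (a @ b @ a @ b) (C [?s] @ C a @ C [?s] @ C a)"
      using p4[OF pres_refl Ca[THEN pres_sym] pres_refl Ca[THEN pres_sym]] Cs by simp
    also have "pres_eq ?R \<dots> (C ([?s] @ a @ [?s] @ a))" by (rule C4[THEN pres_sym])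
    also have "pres_eq ?R \<dots> []" by (rule Ctriv[OF sasa])
    finally show ?thesis .
  qed
  have bsbs: "pres_eq ?R (b @ [?s] @ b @ [?s]) []"
  proof -
    have "pres_eq ?R (b @ [?s] @ b @ [?s]) (C a @ C b @ C a @ C b)"
      using p4[OF Ca[THEN pres_sym] Cb[THEN pres_sym] Ca[THEN pres_sym] Cb[THEN pres_sym]] by simp
    also have "pres_eq ?R \<dots> (C (a @ b @ a @ b))" by (rule C4[THEN pres_sym])
    also have "pres_eq ?R \<dots> []" by (rule Ctriv[OF abab])
    finally show ?thesis .
  qed
  have ss0: "pres_eq ?R ([?s] @ [?s]) []" using ss[of "[]" "[]"] by simp
  have sa: "pres_eq ?R ([?s] @ a) (a @ [?s])" by (rule comm_from_rel[OF sasa ss0 aa])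
  have ab: "pres_eq ?R (a @ b) (b @ a)" by (rule comm_from_rel[OF abab aa bb])
  have bs: "pres_eq ?R (b @ [?s]) ([?s] @ b)" by (rule comm_from_rel[OF bsbs bb ss0])
  define S where "S x = (if x then [?s] else [])" for x
  define A where "A y = (if y then a else [])" for y
  define Bz where "Bz z = (if z then b else [])" for z
  define E where "E x y z = S x @ A y @ Bz z" for x y z
  have Bs: "pres_eq ?R (Bz z @ [?s]) ([?s] @ Bz z)" for z using bs by (simp add: Bz_def pres_refl)
  have As: "pres_eq ?R (A y @ [?s]) ([?s] @ A y)" for y using sa by (simp add: A_def pres_refl pres_sym_iff)
  have Ss: "pres_eq ?R (S x @ [?s]) (S (\<not> x))" for x using ss0 by (simp add: S_def pres_refl)
  have Ba: "pres_eq ?R (Bz z @ a) (a @ Bz z)" for z using ab by (simp add: Bz_def pres_refl pres_sym_iff)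
  have Aa: "pres_eq ?R (A y @ a) (A (\<not> y))" for y using aa by (simp add: A_def pres_refl)
  have Bb: "pres_eq ?R (Bz z @ b) (Bz (\<not> z))" for z using bb by (simp add: Bz_def pres_refl)
  have Es: "pres_eq ?R (E x y z @ [?s]) (E (\<not> x) y z)" for x y z
  proof -
    have "E x y z @ [?s] = (S x @ A y) @ (Bz z @ [?s]) @ []" by (simp add: E_def)
    also have "pres_eq ?R \<dots> ((S x @ A y) @ ([?s] @ Bz z) @ [])" by (rule pres_app[OF Bs])
    also have "\<dots> = S x @ (A y @ [?s]) @ Bz z" by simp
    also have "pres_eq ?R \<dots> (S x @ ([?s] @ A y) @ Bz z)" by (rule pres_app[OF As])
    also have "\<dots> = [] @ (S x @ [?s]) @ (A y @ Bz z)" by simp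
    also have "pres_eq ?R \<dots> ([] @ S (\<not> x) @ (A y @ Bz z))" by (rule pres_app[OF Ss])
    finally show ?thesis by (simp add: E_def)
  qed
  have Ea: "pres_eq ?R (E x y z @ a) (E x (\<not> y) z)" for x y z
  proof -
    have "E x y z @ a = (S x @ A y) @ (Bz z @ a) @ []" by (simp add: E_def)
    also have "pres_eq ?R \<dots> ((S x @ A y) @ (a @ Bz z) @ [])" by (rule pres_app[OF Ba])
    also have "\<dots> = S x @ (A y @ a) @ Bz z" by simp
    also have "pres_eq ?R \<dots> (S x @ A (\<not> y) @ Bz z)" by (rule pres_app[OF Aa])
    finally show ?thesis by (simp add: E_def)
  qed
  have Eb: "pres_eq ?R (E x y z @ b) (E x y (\<not> z))" for x y z
  proof -
    have "E x y z @ b = (S x @ A y) @ (Bz z @ b) @ []" by (simp add: E_def)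
    also have "pres_eq ?R \<dots> ((S x @ A y) @ Bz (\<not> z) @ [])" by (rule pres_app[OF Bb])
    finally show ?thesis by (simp add: E_def)
  qed
  have ts1: "pres_eq ?R [?t, ?s] (b @ [?t])"
    using c2[of "[?t, ?s]" "[]"] by (simp add: b_def pres_sym_iff)
  have ts2: "pres_eq ?R [?t, ?t, ?s] (a @ [?t, ?t])"
  proof -
    have "pres_eq ?R ([] @ [?t, ?t] @ [?s]) ([] @ [?t'] @ [?s])" by (rule pres_app[OF tt])
    also have "pres_eq ?R \<dots> ([?t', ?s] @ [?t, ?t, ?t] @ [])" using ttt[of "[?t', ?s]" "[]"] by (simp add: pres_sym_iff)
    finally show ?thesis by (simp add: a_def)
  qed
  define W where "W = (\<lambda>(x, y, z, d). E x y z @ tp d) ` (UNIV \<times> UNIV \<times> UNIV \<times> {..<3})"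
  have inW: "E x y z @ tp d \<in> W" if "d < 3" for x y z d
    using that unfolding W_def by (intro image_eqI[where x="(x, y, z, d)"]) auto
  have Ew: "E x y z \<in> words_on G_gens" for x y z
    by (simp add: E_def S_def A_def Bz_def a_def b_def G_gens_def)
  show ?thesis
  proof (rule finite_closure[where W=W])
    show "\<exists>v'\<in>W. pres_eq ?R (v @ [?s]) v'" if "v \<in> W" for v
    proof -
      from that obtain x y z d where v: "v = E x y z @ tp d" "d < 3" by (auto simp: W_def)
      have "d = 0 \<or> d = 1 \<or> d = 2" using v by auto
      then show ?thesis
      proof (elim disjE)
        assume d: "d = 0"
        then show ?thesis using Es[of x y z] inW[of 0 "\<not> x" y z] v by auto
      next
        assume d: "d = 1"
        have "v @ [?s] = E x y z @ [?t, ?s] @ []" using v d by simp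
        also have "pres_eq ?R \<dots> (E x y z @ (b @ [?t]) @ [])" by (rule pres_app[OF ts1])
        also have "\<dots> = (E x y z @ b) @ tp 1" by simp
        also have "pres_eq ?R \<dots> (E x y (\<not> z) @ tp 1)" by (rule pres_app2[OF Eb pres_refl])
        finally show ?thesis using inW[of 1] by auto
      next
        assume d: "d = 2"
        have "v @ [?s] = E x y z @ [?t, ?t, ?s] @ []" using v d by (simp add: numeral_2_eq_2)
        also have "pres_eq ?R \<dots> (E x y z @ (a @ [?t, ?t]) @ [])" by (rule pres_app[OF ts2])
        also have "\<dots> = (E x y z @ a) @ tp 2" by (simp add: numeral_2_eq_2)
        also have "pres_eq ?R \<dots> (E x (\<not> y) z @ tp 2)" by (rule pres_app2[OF Ea pres_refl])
        finally show ?thesis using inW[of 2] by auto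
      qed
    qed
    show "\<exists>v'\<in>W. pres_eq ?R (v @ [?t]) v'" if "v \<in> W" for v
    proof -
      from that obtain x y z d where v: "v = E x y z @ tp d" "d < 3" by (auto simp: W_def)
      have e: "v @ [?t] = E x y z @ tp (Suc d)" using v by (simp add: replicate_append_same)
      show ?thesis
      proof (cases "Suc d < 3")
        case True then show ?thesis using e inW pres_refl by metis
      next
        case False then have "Suc d = 3" using v by simp
        then have "v @ [?t] = E x y z @ [?t, ?t, ?t] @ []" using e by (simp add: numeral_3_eq_3)
        also have "pres_eq ?R \<dots> (E x y z @ [])" by (rule ttt)
        finally show ?thesis using inW[of 0 x y z] by auto
      qed
    qed
    have "E False False False @ tp 0 \<in> W" by (rule inW) simp
    then show "[] \<in> W" by (simp add: E_def S_def A_def Bz_def)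
    show "finite W" unfolding W_def by simp
    show "W \<subseteq> words_on G_gens" unfolding W_def using Ew by (auto simp: G_gens_def)
  qed simp
qed


theorem proposition4p11:
  fixes m n :: nat
  assumes "m \<ge> 1" and "n \<ge> 1"
  shows "(\<exists>\<phi>. \<phi> \<in> iso (presented_group G_gens (G_rels m n))
                         (presented_group (H_gens m) (H_rels m n))
              \<and> \<phi> (gen G_gens (G_rels m n) 0) = gen (H_gens m) (H_rels m n) m
              \<and> \<phi> (gen G_gens (G_rels m n) 1) = gen (H_gens m) (H_rels m n) 0)
         \<and> (finite (carrier (presented_group G_gens (G_rels m n)))
              \<longleftrightarrow> (m = 1 \<or> m = 2 \<or> n = 1 \<or> (m = 3 \<and> n = 2)))"
proof (intro conjI iffI)
  show "\<exists>\<phi>. \<phi> \<in> iso (presented_group G_gens (G_rels m n))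
                         (presented_group (H_gens m) (H_rels m n))
              \<and> \<phi> (gen G_gens (G_rels m n) 0) = gen (H_gens m) (H_rels m n) m
              \<and> \<phi> (gen G_gens (G_rels m n) 1) = gen (H_gens m) (H_rels m n) 0"
    by (rule iso_GH[OF assms(1)])
next
  assume "m = 1 \<or> m = 2 \<or> n = 1 \<or> (m = 3 \<and> n = 2)"
  then show "finite (carrier (presented_group G_gens (G_rels m n)))"
    using fin_m1[of n] fin_m2[OF assms(2)] fin_n1[OF assms(1)] fin_32 by auto
next
  assume fin: "finite (carrier (presented_group G_gens (G_rels m n)))"
  show "m = 1 \<or> m = 2 \<or> n = 1 \<or> (m = 3 \<and> n = 2)"
  proof (rule ccontr)
    assume "\<not> ?thesis"
    then have m3: "3 \<le> m" and n2: "2 \<le> n" and nt: "\<not> (m = 3 \<and> n = 2)" using assms by auto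
    show False
    proof (cases "3 \<le> n")
      case True then show False using inst_big[OF m3 True] fin by simp
    next
      case False
      then have "n = 2" "4 \<le> m" using n2 nt m3 by auto
      then show False using inst_small[of m] fin by simp
    qed
  qed
qed

end
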